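(* Let $d,t,m,L,N_1,\dots,N_L$ be natural numbers with $N_L=1$, let $\mathbf{N}=(N_L,N_{L-1},\dots,N_1,N_0=d)$, and let $\mathcal{W}=\{w^1,\dots,w^t\}\subset\mathbb{R}^d$. Suppose that (1) $t\geq 3m(N_1+1)(N_2+1)\cdots(N_L+1)$; (2) $w^1_1>w^2_1>\dots>w^t_1$ and $w^i_j=0$ for all $i$ and all $j=2,\dots,d$; (3) $f:\mathbb{R}^d\to\{0,1\}$ satisfies $f(w^i)\neq f(w^{i+1})$ for $i=1,\dots,t-1$. Then for any $\varphi\in\mathcal{NN}_{\mathbf{N},L}$ and any monotonic $g:\mathbb{R}\to\mathbb{R}$ there exists $\mathcal{U}\subset\mathcal{W}$ with $|\mathcal{U}|\geq m$ and $|g(\varphi(w))-f(w)|\geq 1/2$ for all $w\in\mathcal{U}$.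
   Context: $\mathcal{NN}_{\mathbf{N},L}$ is the set of maps $\varphi=W^L\rho W^{L-1}\rho\cdots\rho W^1:\mathbb{R}^d\to\mathbb{R}$ where each $W^\ell:\mathbb{R}^{N_{\ell-1}}\to\mathbb{R}^{N_\ell}$ is affine and $\rho(t)=\max\{0,t\}$ is applied coordinatewise. *)

theory Defs
  imports Complex_Main
begin

text \<open>Points of R^k are represented as functions nat => real; only the coordinates
  0,...,k-1 are significant (coordinate j of the paper is index j-1 here).\<close>

definition relu :: "real \<Rightarrow> real" where
  "relu s = max 0 s"

definition affine_layer ::
  "(nat \<Rightarrow> nat) \<Rightarrow> (nat \<Rightarrow> nat \<Rightarrow> nat \<Rightarrow> real) \<Rightarrow> (nat \<Rightarrow> nat \<Rightarrow> real)
    \<Rightarrow> nat \<Rightarrow> (nat \<Rightarrow> real) \<Rightarrow> nat \<Rightarrow> real" where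
  "affine_layer N A b l h i = (\<Sum>j<N (l - 1). A l i j * h j) + b l i"

primrec hidden ::
  "(nat \<Rightarrow> nat) \<Rightarrow> (nat \<Rightarrow> nat \<Rightarrow> nat \<Rightarrow> real) \<Rightarrow> (nat \<Rightarrow> nat \<Rightarrow> real)
    \<Rightarrow> nat \<Rightarrow> (nat \<Rightarrow> real) \<Rightarrow> nat \<Rightarrow> real" where
  "hidden N A b 0 x = x"
| "hidden N A b (Suc l) x = (\<lambda>i. relu (affine_layer N A b (Suc l) (hidden N A b l x) i))"

definition nn_realize ::
  "(nat \<Rightarrow> nat) \<Rightarrow> nat \<Rightarrow> (nat \<Rightarrow> nat \<Rightarrow> nat \<Rightarrow> real) \<Rightarrow> (nat \<Rightarrow> nat \<Rightarrow> real)
    \<Rightarrow> (nat \<Rightarrow> real) \<Rightarrow> real" where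
  "nn_realize N L A b x = affine_layer N A b L (hidden N A b (L - 1) x) 0"

definition NN :: "(nat \<Rightarrow> nat) \<Rightarrow> nat \<Rightarrow> ((nat \<Rightarrow> real) \<Rightarrow> real) set" where
  "NN N L = {\<phi>. \<exists>A b. \<phi> = nn_realize N L A b}"

end

theory Submission
  imports Defs
begin

lemma divmod_aux:
  "r < (n::nat) \<Longrightarrow> (q * n + r) div n = q" "r < (n::nat) \<Longrightarrow> (q * n + r) mod n = r"
  by simp_all

lemma strict_dec:
  fixes x :: "nat \<Rightarrow> real"
  assumes "\<And>i. 1 \<le> i \<Longrightarrow> i < t \<Longrightarrow> x (Suc i) < x i"
  shows "1 \<le> i \<Longrightarrow> i < j \<Longrightarrow> j \<le> t \<Longrightarrow> x j < x i"
proof (induction j)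
  case 0 then show ?case by simp
next
  case (Suc j)
  show ?case
  proof (cases "i = j")
    case True then show ?thesis using Suc assms by simp
  next
    case False
    then have "x j < x i" using Suc by simp
    moreover have "x (Suc j) < x j" using Suc False assms[of j] by simp
    ultimately show ?thesis by simp
  qed
qed

lemma aff_sum0:
  fixes x :: "nat \<Rightarrow> real" and h :: "nat \<Rightarrow> nat \<Rightarrow> real"
  assumes "\<And>n. n < M \<Longrightarrow> \<exists>a c. \<forall>i\<in>S. h n i = a * x i + c"
  shows "\<exists>a c. \<forall>i\<in>S. (\<Sum>n<M. \<alpha> n * h n i) = a * x i + c"
  using assms
proof (induction M)
  case 0 then show ?case by (intro exI[of _ 0]) simp
next
  case (Suc M)
  then obtain a c where ac: "\<forall>i\<in>S. (\<Sum>n<M. \<alpha> n * h n i) = a * x i + c" by auto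
  obtain a' c' where ac': "\<forall>i\<in>S. h M i = a' * x i + c'" using Suc.prems by blast
  show ?case
    by (rule exI[of _ "a + \<alpha> M * a'"], rule exI[of _ "c + \<alpha> M * c'"])
       (simp add: ac ac' algebra_simps)
qed

lemma aff_sum:
  fixes x :: "nat \<Rightarrow> real" and h :: "nat \<Rightarrow> nat \<Rightarrow> real"
  assumes "\<And>n. n < M \<Longrightarrow> \<exists>a c. \<forall>i\<in>S. h n i = a * x i + c"
  shows "\<exists>a c. \<forall>i\<in>S. (\<Sum>n<M. \<alpha> n * h n i) + \<beta> = a * x i + c"
proof -
  obtain a c where "\<forall>i\<in>S. (\<Sum>n<M. \<alpha> n * h n i) = a * x i + c"
    using aff_sum0[of M S h x \<alpha>] assms by blast
  then have "\<forall>i\<in>S. (\<Sum>n<M. \<alpha> n * h n i) + \<beta> = a * x i + (c + \<beta>)" by simp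
  then show ?thesis by blast
qed

lemma step:
  fixes x :: "nat \<Rightarrow> real" and blk :: "nat \<Rightarrow> nat" and u :: "nat \<Rightarrow> nat \<Rightarrow> real"
  assumes xdec: "\<And>i j. 1 \<le> i \<Longrightarrow> i \<le> j \<Longrightarrow> j \<le> t \<Longrightarrow> x j \<le> x i"
  and bmono: "\<And>i j. 1 \<le> i \<Longrightarrow> i \<le> j \<Longrightarrow> j \<le> t \<Longrightarrow> blk i \<le> blk j"
  and bbound: "\<And>i. 1 \<le> i \<Longrightarrow> i \<le> t \<Longrightarrow> blk i < Q"
  and aff: "\<And>k n. n < M \<Longrightarrow> \<exists>a c. \<forall>i\<in>{i. 1 \<le> i \<and> i \<le> t \<and> blk i = k}. u n i = a * x i + c"
  shows "\<exists>blk'. (\<forall>i j. 1 \<le> i \<longrightarrow> i \<le> j \<longrightarrow> j \<le> t \<longrightarrow> blk' i \<le> blk' j)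
     \<and> (\<forall>i. 1 \<le> i \<longrightarrow> i \<le> t \<longrightarrow> blk' i < Q * (M+1))
     \<and> (\<forall>k n. n < M \<longrightarrow> (\<exists>a c. \<forall>i\<in>{i. 1 \<le> i \<and> i \<le> t \<and> blk' i = k}. relu (u n i) = a * x i + c))"
proof -
  define af where "af k n = (SOME a. \<exists>c. \<forall>i\<in>{i. 1 \<le> i \<and> i \<le> t \<and> blk i = k}. u n i = a * x i + c)" for k n
  define cf where "cf k n = (SOME c. \<forall>i\<in>{i. 1 \<le> i \<and> i \<le> t \<and> blk i = k}. u n i = af k n * x i + c)" for k n
  have afc: "u n i = af k n * x i + cf k n" if "n < M" "1 \<le> i" "i \<le> t" "blk i = k" for n i k
  proof -
    have "\<exists>c. \<forall>i\<in>{i. 1 \<le> i \<and> i \<le> t \<and> blk i = k}. u n i = af k n * x i + c"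
      unfolding af_def using someI_ex[OF aff[OF that(1), of k]] .
    then have "\<forall>i\<in>{i. 1 \<le> i \<and> i \<le> t \<and> blk i = k}. u n i = af k n * x i + cf k n"
      unfolding cf_def by (rule someI_ex)
    then show ?thesis using that by auto
  qed
  define chg where "chg n i = (if 0 \<le> af (blk i) n then u n i \<le> 0 else 0 < u n i)" for n i
  define cnt where "cnt i = card {n. n < M \<and> chg n i}" for i
  define blk' where "blk' i = blk i * (M+1) + cnt i" for i
  have cnt_le: "cnt i \<le> M" for i
  proof -
    have "cnt i \<le> card {..<M}" unfolding cnt_def by (rule card_mono) auto
    then show ?thesis by simp
  qed
  have chg_mono: "chg n j" if "1 \<le> i" "i \<le> j" "j \<le> t" "blk i = blk j" "n < M" "chg n i" for n i j
  proof -
    let ?a = "af (blk i) n" and ?c = "cf (blk i) n"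
    have ui: "u n i = ?a * x i + ?c" using afc that by auto
    have uj: "u n j = ?a * x j + ?c" using afc[of n j "blk i"] that by auto
    have xx: "x j \<le> x i" using xdec that by auto
    have aj: "af (blk j) n = ?a" using that(4) by simp
    have ci: "if 0 \<le> ?a then u n i \<le> 0 else 0 < u n i" using that(6) unfolding chg_def .
    show ?thesis
    proof (cases "0 \<le> ?a")
      case True
      then have "?a * x j \<le> ?a * x i" using xx by (simp add: mult_left_mono)
      moreover have "u n i \<le> 0" using ci True by simp
      ultimately have "u n j \<le> 0" using ui uj by linarith
      then show ?thesis unfolding chg_def aj using True by simp
    next
      case False
      then have "?a * x j \<ge> ?a * x i" using xx by (simp add: mult_left_mono_neg)
      moreover have "0 < u n i" using ci False by simp
      ultimately have "0 < u n j" using ui uj by linarith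
      then show ?thesis unfolding chg_def aj using False by simp
    qed
  qed
  have set_mono: "{n. n < M \<and> chg n i} \<subseteq> {n. n < M \<and> chg n j}"
    if "1 \<le> i" "i \<le> j" "j \<le> t" "blk i = blk j" for i j
    using chg_mono that by blast
  have mono': "blk' i \<le> blk' j" if "1 \<le> i" "i \<le> j" "j \<le> t" for i j
  proof (cases "blk i = blk j")
    case True
    then have "cnt i \<le> cnt j" unfolding cnt_def by (intro card_mono) (use set_mono[OF that True] in auto)
    then show ?thesis unfolding blk'_def using True by simp
  next
    case False
    then have "blk i + 1 \<le> blk j" using bmono[OF that] by simp
    then have "(blk i + 1) * (M+1) \<le> blk j * (M+1)" by (rule mult_right_mono) simp
    then show ?thesis unfolding blk'_def using cnt_le[of i] by (simp add: algebra_simps)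
  qed
  have bound': "blk' i < Q * (M+1)" if "1 \<le> i" "i \<le> t" for i
  proof -
    have "blk i + 1 \<le> Q" using bbound[OF that] by simp
    then have "(blk i + 1) * (M+1) \<le> Q * (M+1)" by (rule mult_right_mono) simp
    then show ?thesis unfolding blk'_def using cnt_le[of i] by (simp add: algebra_simps)
  qed
  have same: "blk i = blk j \<and> cnt i = cnt j" if "blk' i = blk' j" for i j
  proof -
    have "blk' i div (M+1) = blk i" "blk' j div (M+1) = blk j"
         "blk' i mod (M+1) = cnt i" "blk' j mod (M+1) = cnt j"
      unfolding blk'_def using cnt_le[of i] cnt_le[of j] divmod_aux[of _ "M+1"] by (simp_all only: less_Suc_eq_le Suc_eq_plus1)
    then show ?thesis using that by metis
  qed
  have chg_eq0: "chg n i = chg n j" if "1 \<le> i" "i \<le> j" "j \<le> t" "blk' i = blk' j" "n < M" for n i j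
  proof -
    have s: "blk i = blk j" "cnt i = cnt j" using same[OF that(4)] by auto
    have "{n. n < M \<and> chg n i} = {n. n < M \<and> chg n j}"
      using set_mono[OF that(1-3) s(1)] s(2) unfolding cnt_def
      by (intro card_subset_eq) auto
    then show ?thesis using that(5) by blast
  qed
  have pos_eq: "(0 < u n i) = (0 < u n j)"
    if "1 \<le> i" "i \<le> t" "1 \<le> j" "j \<le> t" "blk' i = blk' j" "n < M" for n i j
  proof -
    have ce: "chg n i = chg n j"
    proof (cases "i \<le> j")
      case True then show ?thesis using chg_eq0 that by auto
    next
      case False then show ?thesis using chg_eq0[of j i n] that by auto
    qed
    have "blk i = blk j" using same[OF that(5)] by auto
    then show ?thesis using ce unfolding chg_def by (auto split: if_splits)
  qed
  have relu_aff: "\<exists>a c. \<forall>i\<in>{i. 1 \<le> i \<and> i \<le> t \<and> blk' i = k}. relu (u n i) = a * x i + c"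
    if "n < M" for k n
  proof (cases "\<exists>i0. 1 \<le> i0 \<and> i0 \<le> t \<and> blk' i0 = k \<and> 0 < u n i0")
    case True
    then obtain i0 where i0: "1 \<le> i0" "i0 \<le> t" "blk' i0 = k" "0 < u n i0" by blast
    show ?thesis
    proof (rule exI[of _ "af (blk i0) n"], rule exI[of _ "cf (blk i0) n"], intro ballI)
      fix i assume "i \<in> {i. 1 \<le> i \<and> i \<le> t \<and> blk' i = k}"
      then have i: "1 \<le> i" "i \<le> t" "blk' i = k" by auto
      have "0 < u n i" using pos_eq[of i i0 n] i i0 that by auto
      moreover have "blk i = blk i0" using same[of i i0] i i0 by auto
      ultimately show "relu (u n i) = af (blk i0) n * x i + cf (blk i0) n"
        using afc[of n i "blk i0"] i that unfolding relu_def by auto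
    qed
  next
    case False
    show ?thesis
      by (intro exI[of _ 0] exI[of _ 0]) (use False in \<open>auto simp: relu_def\<close>)
  qed
  show ?thesis
    apply (rule exI[of _ blk'])
    using mono' bound' relu_aff by blast
qed

lemma inv:
  fixes w :: "nat \<Rightarrow> nat \<Rightarrow> real"
  assumes xdec: "\<And>i j. 1 \<le> i \<Longrightarrow> i \<le> j \<Longrightarrow> j \<le> t \<Longrightarrow> w j 0 \<le> w i 0"
  and zero: "\<And>i j. 1 \<le> i \<Longrightarrow> i \<le> t \<Longrightarrow> j \<ge> 1 \<Longrightarrow> w i j = 0"
  shows "\<exists>blk. (\<forall>i j. 1 \<le> i \<longrightarrow> i \<le> j \<longrightarrow> j \<le> t \<longrightarrow> blk i \<le> blk j)
     \<and> (\<forall>i. 1 \<le> i \<longrightarrow> i \<le> t \<longrightarrow> blk i < (\<Prod>l'\<in>{1..l}. N l' + 1))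
     \<and> (\<forall>k j. j < N l \<longrightarrow> (\<exists>a c. \<forall>i\<in>{i. 1 \<le> i \<and> i \<le> t \<and> blk i = k}.
            hidden N A b l (w i) j = a * w i 0 + c))"
proof (induction l)
  case 0
  have "\<exists>a c. \<forall>i\<in>{i. 1 \<le> i \<and> i \<le> t \<and> (0::nat) = k}. w i j = a * w i 0 + c" for k j
  proof (cases "j = 0")
    case True
    then have "\<forall>i\<in>{i. 1 \<le> i \<and> i \<le> t \<and> (0::nat) = k}. w i j = 1 * w i 0 + 0" by simp
    then show ?thesis by blast
  next
    case False then show ?thesis by (intro exI[of _ 0] exI[of _ 0]) (auto simp: zero)
  qed
  then show ?case by (intro exI[of _ "\<lambda>_. 0"]) simp
next
  case (Suc l)
  then obtain blk where b1: "\<forall>i j. 1 \<le> i \<longrightarrow> i \<le> j \<longrightarrow> j \<le> t \<longrightarrow> blk i \<le> blk j"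
    and b2: "\<forall>i. 1 \<le> i \<longrightarrow> i \<le> t \<longrightarrow> blk i < (\<Prod>l'\<in>{1..l}. N l' + 1)"
    and b3: "\<forall>k j. j < N l \<longrightarrow> (\<exists>a c. \<forall>i\<in>{i. 1 \<le> i \<and> i \<le> t \<and> blk i = k}.
            hidden N A b l (w i) j = a * w i 0 + c)" by blast
  define u where "u n i = affine_layer N A b (Suc l) (hidden N A b l (w i)) n" for n i
  have uaff: "\<exists>a c. \<forall>i\<in>{i. 1 \<le> i \<and> i \<le> t \<and> blk i = k}. u n i = a * w i 0 + c" for k n
    unfolding u_def affine_layer_def
    using aff_sum[of "N l" "{i. 1 \<le> i \<and> i \<le> t \<and> blk i = k}" "\<lambda>j i. hidden N A b l (w i) j"
        "\<lambda>i. w i 0" "\<lambda>j. A (Suc l) n j" "b (Suc l) n"] b3 by simp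
  obtain blk' where c1: "\<forall>i j. 1 \<le> i \<longrightarrow> i \<le> j \<longrightarrow> j \<le> t \<longrightarrow> blk' i \<le> blk' j"
    and c2: "\<forall>i. 1 \<le> i \<longrightarrow> i \<le> t \<longrightarrow> blk' i < (\<Prod>l'\<in>{1..l}. N l' + 1) * (N (Suc l) + 1)"
    and c3: "\<forall>k n. n < N (Suc l) \<longrightarrow> (\<exists>a c. \<forall>i\<in>{i. 1 \<le> i \<and> i \<le> t \<and> blk' i = k}. relu (u n i) = a * w i 0 + c)"
    using step[where t=t and x="\<lambda>i. w i 0" and blk=blk and Q="\<Prod>l'\<in>{1..l}. N l' + 1" and M="N (Suc l)" and u=u] xdec b1 b2 uaff by blast
  have pr: "(\<Prod>l'\<in>{1..Suc l}. N l' + 1) = (\<Prod>l'\<in>{1..l}. N l' + 1) * (N (Suc l) + 1)"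
    by (simp add: prod.cl_ivl_Suc)
  show ?case
    by (intro exI[of _ blk']) (use c1 c2 c3 pr in \<open>simp add: u_def\<close>)
qed

lemma count:
  fixes blk :: "nat \<Rightarrow> nat"
  assumes bmono: "\<And>i j. 1 \<le> i \<Longrightarrow> i \<le> j \<Longrightarrow> j \<le> t \<Longrightarrow> blk i \<le> blk j"
  and bbound: "\<And>i. 1 \<le> i \<Longrightarrow> i \<le> t \<Longrightarrow> blk i < P"
  and P: "P \<ge> 1" and T: "3 * (m * P) \<le> t"
  and tri: "\<And>i. 1 \<le> i \<Longrightarrow> i + 2 \<le> t \<Longrightarrow> blk i = blk (i+2) \<Longrightarrow> \<exists>e\<in>{i..i+2}. bad e"
  shows "\<exists>E. E \<subseteq> {1..t} \<and> card E \<ge> m \<and> (\<forall>e\<in>E. bad e)"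
proof (cases "m = 0")
  case True then show ?thesis by (intro exI[of _ "{}"]) simp
next
  case False
  define T where "T = m * P"
  have T1: "T \<ge> 1" using False P unfolding T_def by simp
  define G where "G T' = {k. k < T' \<and> blk (3*k+1) < blk (3*k+3)}" for T'
  have cl: "card (G T') + blk 1 \<le> blk (max 1 (3*T'))" if "T' \<le> T" for T'
    using that
  proof (induction T')
    case 0 then show ?case by (simp add: G_def)
  next
    case (Suc T')
    have le: "3 * T' + 3 \<le> t" using Suc.prems T unfolding T_def by simp
    have a1: "blk (max 1 (3*T')) \<le> blk (3*T'+1)" using bmono[of "max 1 (3*T')" "3*T'+1"] le by simp
    have a2: "blk (3*T'+1) \<le> blk (3*T'+3)" using bmono[of "3*T'+1" "3*T'+3"] le by simp
    have GS: "G (Suc T') = G T' \<union> (if blk (3*T'+1) < blk (3*T'+3) then {T'} else {})"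
      unfolding G_def by (auto simp: less_Suc_eq)
    have fin: "finite (G T')" unfolding G_def by simp
    have "card (G (Suc T')) \<le> card (G T') + (if blk (3*T'+1) < blk (3*T'+3) then 1 else 0)"
      unfolding GS using fin by (auto simp: G_def)
    then have "card (G (Suc T')) + blk 1 \<le> blk (3*T'+3)" using Suc a1 a2 by (simp split: if_splits)
    moreover have "max 1 (3 * Suc T') = 3*T'+3" by simp
    ultimately show ?case by metis
  qed
  have "card (G T) + blk 1 \<le> blk (max 1 (3*T))" using cl by simp
  moreover have "blk (max 1 (3*T)) < P" using bbound[of "max 1 (3*T)"] T T1 unfolding T_def by simp
  ultimately have cG: "card (G T) \<le> P - 1" by simp
  define K where "K = {k. k < T \<and> blk (3*k+1) = blk (3*k+3)}"
  have kle: "blk (3*k+1) \<le> blk (3*k+3)" if "k < T" for k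
  proof -
    have "3*k+3 \<le> 3*T" using that by simp
    then show ?thesis using bmono[of "3*k+1" "3*k+3"] T unfolding T_def by simp
  qed
  have KG: "K = {..<T} - G T"
    unfolding K_def G_def using kle by force
  have cK: "card K = T - card (G T)"
    unfolding KG by (subst card_Diff_subset) (auto simp: G_def)
  have "m * P - (P - 1) \<ge> m"
    using False P by (cases m; cases P) (auto simp: algebra_simps)
  then have cardK: "card K \<ge> m" using cK cG unfolding T_def by linarith
  have ex: "\<exists>e\<in>{3*k+1..3*k+3}. bad e" if "k \<in> K" for k
  proof -
    have "3*k+3 \<le> 3*T" using that unfolding K_def by simp
    then show ?thesis using tri[of "3*k+1"] that T unfolding K_def T_def by (simp add: numeral_eq_Suc)
  qed
  define ch where "ch k = (SOME e. e \<in> {3*k+1..3*k+3} \<and> bad e)" for k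
  have ch: "ch k \<in> {3*k+1..3*k+3} \<and> bad (ch k)" if "k \<in> K" for k
    unfolding ch_def using someI_ex[of "\<lambda>e. e \<in> {3*k+1..3*k+3} \<and> bad e"] ex[OF that] by blast
  have inj: "inj_on ch K"
  proof (rule inj_onI)
    fix k k' assume "k \<in> K" "k' \<in> K" "ch k = ch k'"
    then show "k = k'" using ch[of k] ch[of k'] by auto
  qed
  show ?thesis
  proof (intro exI[of _ "ch ` K"] conjI)
    show "ch ` K \<subseteq> {1..t}"
    proof
      fix e assume "e \<in> ch ` K"
      then obtain k where k: "k \<in> K" "e = ch k" by auto
      have "3*k+3 \<le> 3*T" using k unfolding K_def by simp
      then show "e \<in> {1..t}" using ch[OF k(1)] k T unfolding T_def by auto
    qed
    show "m \<le> card (ch ` K)" using card_image[OF inj] cardK by simp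
    show "\<forall>e\<in>ch ` K. bad e" using ch by auto
  qed
qed

lemma aff3:
  fixes a c x1 x2 x3 :: real
  assumes "x2 \<le> x1" "x3 \<le> x2"
  shows "(a*x1+c \<le> a*x2+c \<and> a*x2+c \<le> a*x3+c) \<or> (a*x1+c \<ge> a*x2+c \<and> a*x2+c \<ge> a*x3+c)"
proof (cases "0 \<le> a")
  case True
  then have "a*x2 \<le> a*x1" "a*x3 \<le> a*x2" using assms by (simp_all add: mult_left_mono)
  then show ?thesis by simp
next
  case False
  then have "a*x2 \<ge> a*x1" "a*x3 \<ge> a*x2" using assms by (simp_all add: mult_left_mono_neg)
  then show ?thesis by simp
qed

lemma mono3:
  fixes g :: "real \<Rightarrow> real"
  assumes "mono g \<or> antimono g" "(p1 \<le> p2 \<and> p2 \<le> p3) \<or> (p1 \<ge> p2 \<and> p2 \<ge> p3)"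
  shows "(g p1 \<le> g p2 \<and> g p2 \<le> g p3) \<or> (g p1 \<ge> g p2 \<and> g p2 \<ge> g p3)"
  using assms by (auto dest: monoD antimonoD)

lemma triple:
  fixes y1 y2 y3 f1 f2 f3 :: real
  assumes "f1 \<in> {0,1}" "f2 \<in> {0,1}" "f3 \<in> {0,1}" "f1 \<noteq> f2" "f2 \<noteq> f3"
    "(y1 \<le> y2 \<and> y2 \<le> y3) \<or> (y1 \<ge> y2 \<and> y2 \<ge> y3)"
  shows "\<bar>y1 - f1\<bar> \<ge> 1/2 \<or> \<bar>y2 - f2\<bar> \<ge> 1/2 \<or> \<bar>y3 - f3\<bar> \<ge> 1/2"
  using assms by (auto simp: abs_if)

theorem lemma5p4:
  fixes d t m L :: nat and N :: "nat \<Rightarrow> nat"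
    and w :: "nat \<Rightarrow> nat \<Rightarrow> real"
    and f :: "(nat \<Rightarrow> real) \<Rightarrow> real"
    and \<phi> :: "(nat \<Rightarrow> real) \<Rightarrow> real"
    and g :: "real \<Rightarrow> real"
  assumes "d \<ge> 1" and "L \<ge> 1" and "N 0 = d" and "N L = 1"
    and "real t \<ge> 3 * real m * (\<Prod>l\<in>{1..L}. real (N l + 1))"
    and "\<And>i. 1 \<le> i \<Longrightarrow> i < t \<Longrightarrow> w i 0 > w (Suc i) 0"
    and "\<And>i j. 1 \<le> i \<Longrightarrow> i \<le> t \<Longrightarrow> j \<ge> 1 \<Longrightarrow> w i j = 0"
    and "\<And>x. f x \<in> {0, 1}"
    and "\<And>i. 1 \<le> i \<Longrightarrow> i < t \<Longrightarrow> f (w i) \<noteq> f (w (Suc i))"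
    and "\<phi> \<in> NN N L"
    and "mono g \<or> antimono g"
  shows "\<exists>U. U \<subseteq> w ` {1..t} \<and> card U \<ge> m \<and> (\<forall>u\<in>U. \<bar>g (\<phi> u) - f u\<bar> \<ge> 1/2)"
proof -
  obtain A b where phi: "\<phi> = nn_realize N L A b" using assms(10) unfolding NN_def by blast
  have sd: "w j 0 < w i 0" if "1 \<le> i" "i < j" "j \<le> t" for i j
    using strict_dec[of t "\<lambda>i. w i 0" i j] assms(6) that by blast
  have xdec: "w j 0 \<le> w i 0" if "1 \<le> i" "i \<le> j" "j \<le> t" for i j
  proof (cases "i = j")
    case True then show ?thesis by simp
  next
    case False then show ?thesis using sd[of i j] that by simp
  qed
  obtain blk where b1: "\<forall>i j. 1 \<le> i \<longrightarrow> i \<le> j \<longrightarrow> j \<le> t \<longrightarrow> blk i \<le> blk j"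
    and b2: "\<forall>i. 1 \<le> i \<longrightarrow> i \<le> t \<longrightarrow> blk i < (\<Prod>l'\<in>{1..L-1}. N l' + 1)"
    and b3: "\<forall>k j. j < N (L-1) \<longrightarrow> (\<exists>a c. \<forall>i\<in>{i. 1 \<le> i \<and> i \<le> t \<and> blk i = k}.
            hidden N A b (L-1) (w i) j = a * w i 0 + c)"
    using inv[where t=t and w=w and l="L-1" and N=N and A=A and b=b] xdec assms(7) by blast
  define P where "P = (\<Prod>l'\<in>{1..L-1}. N l' + 1)"
  have P1: "P \<ge> 1" unfolding P_def by (simp add: prod_pos Suc_le_eq)
  have "(\<Prod>l\<in>{1..Suc (L-1)}. N l + 1) = P * (N (Suc (L-1)) + 1)"
    by (simp add: prod.cl_ivl_Suc P_def)
  then have Pfull: "(\<Prod>l\<in>{1..L}. N l + 1) = P * 2" using assms(2) assms(4) by simp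
  have "(\<Prod>l\<in>{1..L}. real (N l + 1)) = real (\<Prod>l\<in>{1..L}. N l + 1)" by (simp only: of_nat_prod)
  also have "\<dots> = real P * 2" using Pfull by simp
  finally have "real t \<ge> 3 * real m * (real P * 2)" using assms(5) by simp
  then have "real t \<ge> real (3 * m * (P * 2))" by simp
  then have tP: "3 * (m * P) \<le> t" by linarith
  have phiaff: "\<exists>a c. \<forall>i\<in>{i. 1 \<le> i \<and> i \<le> t \<and> blk i = k}. \<phi> (w i) = a * w i 0 + c" for k
  proof -
    have "\<exists>a c. \<forall>i\<in>{i. 1 \<le> i \<and> i \<le> t \<and> blk i = k}.
        (\<Sum>j<N (L-1). A L 0 j * hidden N A b (L - 1) (w i) j) + b L 0 = a * w i 0 + c"
      by (rule aff_sum) (use b3 in blast)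
    then show ?thesis unfolding phi nn_realize_def affine_layer_def .
  qed
  define bad where "bad e = (\<bar>g (\<phi> (w e)) - f (w e)\<bar> \<ge> 1/2)" for e
  have tri: "\<exists>e\<in>{i..i+2}. bad e" if i: "1 \<le> i" "i + 2 \<le> t" "blk i = blk (i+2)" for i
  proof -
    have "blk i \<le> blk (i+1)" "blk (i+1) \<le> blk (i+2)" using b1 i by auto
    then have bi1: "blk (i+1) = blk i" using i by simp
    obtain a c where ac: "\<forall>j\<in>{j. 1 \<le> j \<and> j \<le> t \<and> blk j = blk i}. \<phi> (w j) = a * w j 0 + c"
      using phiaff[of "blk i"] by blast
    have p: "\<phi> (w i) = a * w i 0 + c" "\<phi> (w (i+1)) = a * w (i+1) 0 + c" "\<phi> (w (i+2)) = a * w (i+2) 0 + c"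
      using ac i bi1 by auto
    have "w (i+1) 0 \<le> w i 0" "w (i+2) 0 \<le> w (i+1) 0" using xdec i by auto
    from aff3[OF this, of a c] p have "(\<phi> (w i) \<le> \<phi> (w (i+1)) \<and> \<phi> (w (i+1)) \<le> \<phi> (w (i+2)))
        \<or> (\<phi> (w i) \<ge> \<phi> (w (i+1)) \<and> \<phi> (w (i+1)) \<ge> \<phi> (w (i+2)))" by simp
    from mono3[OF assms(11) this] have mon: "(g (\<phi> (w i)) \<le> g (\<phi> (w (i+1))) \<and> g (\<phi> (w (i+1))) \<le> g (\<phi> (w (i+2))))
        \<or> (g (\<phi> (w i)) \<ge> g (\<phi> (w (i+1))) \<and> g (\<phi> (w (i+1))) \<ge> g (\<phi> (w (i+2))))" .
    have f1: "f (w i) \<noteq> f (w (i+1))" using assms(9)[of i] i by simp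
    have f2: "f (w (i+1)) \<noteq> f (w (i+2))" using assms(9)[of "i+1"] i by simp
    from triple[OF assms(8) assms(8) assms(8) f1 f2 mon]
    have "bad i \<or> bad (i+1) \<or> bad (i+2)" unfolding bad_def .
    then show ?thesis by auto
  qed
  obtain E where E: "E \<subseteq> {1..t}" "card E \<ge> m" "\<forall>e\<in>E. bad e"
    using count[where blk=blk and t=t and P=P and m=m and bad=bad] b1 b2 P1 tP tri
    unfolding P_def by blast
  have inj: "inj_on w E"
  proof (rule inj_onI)
    fix i j assume ij: "i \<in> E" "j \<in> E" "w i = w j"
    show "i = j"
    proof (rule ccontr)
      assume "i \<noteq> j"
      then have "i < j \<or> j < i" by auto
      moreover have "1 \<le> i" "i \<le> t" "1 \<le> j" "j \<le> t" using ij E(1) by auto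
      ultimately show False using sd[of i j] sd[of j i] ij(3) by auto
    qed
  qed
  show ?thesis
  proof (intro exI[of _ "w ` E"] conjI)
    show "w ` E \<subseteq> w ` {1..t}" using E(1) by auto
    show "m \<le> card (w ` E)" using card_image[OF inj] E(2) by simp
    show "\<forall>u\<in>w ` E. 1/2 \<le> \<bar>g (\<phi> u) - f u\<bar>" using E(3) unfolding bad_def by auto
  qed
qed

end
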